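(* In the parallel-links routing game with homogeneous costs described in the context, suppose either $N=2$ or all $N$ users have equal demands $r^i=R/N$. Let $\alpha^i>0$ with $\sum_i\alpha^i=1$, and let $PoS$ be the ratio of the weighted social cost of the NBS, $\sum_i\alpha^i\tilde g^i$, to the minimum over feasible profiles of the weighted social cost $J^\alpha_{sys}(\mathbf f)=\sum_i\alpha^i\sum_lf^i_lT_l(f_l)$. Then $PoS\le\max_i\alpha^i/\min_i\alpha^i$.
   Context: Parallel-links routing game: users $\mathcal N=\{1,\dots,N\}$ share parallel links $\mathcal L=\{1,\dots,L\}$ from a common source to a common destination; link $l$ has capacity $c_l$. User $i$ has demand $r^i>0$, $R=\sum_ir^i<\sum_lc_l$. A routing strategy of user $i$ is $\mathbf f^i=(f^i_l)_l$ with $f^i_l\ge0$, $\sum_lf^i_l=r^i$; feasible profiles form $\mathbf F$; $f_l=\sum_if^i_l$. Homogeneous costs: $J^i(\mathbf f)=\sum_lf^i_lT_l(f_l)$, each $T_l:[0,\infty)\to[0,\infty)$ strictly increasing, convex, continuously differentiable, with $T_l(f_l)=T(c_l-f_l)$ for $f_l<c_l$ and $T_l(f_l)=\infty$ for $f_l\ge c_l$, for a single link-independent function $T$ with $T(c_l-f_l)$ strictly increasing in $f_l$. NEP: the unique feasible $\hat{\mathbf f}$ in which each user's strategy minimizes its cost given the others'; $\hat J^i=J^i(\hat{\mathbf f})$. Bargaining: $\mathcal G$ is the set of all vectors $\sum_{m=1}^Mp_m(J^1(\mathbf f(m)),\dots,J^N(\mathbf f(m)))$ with $M$ finite, $p_m>0$,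 $\sum p_m=1$, $\mathbf f(m)\in\mathbf F$; the NBS is the unique $\tilde{\mathbf g}$ maximizing $\prod_i(\hat J^i-g^i)$ over $\mathbf g\in\mathcal G$ with $g^i\le\hat J^i$ for all $i$. *)

theory Defs
  imports "HOL-Analysis.Analysis" "HOL-Library.Extended_Real"
begin

(* Users are indexed by i < N, links by l < L (0-based).
   A profile is f :: nat => nat => real, f i l = flow of user i on link l.
   Costs take values in ereal (infinite when a link is at or above capacity). *)

definition link_flow :: "nat \<Rightarrow> (nat \<Rightarrow> nat \<Rightarrow> real) \<Rightarrow> nat \<Rightarrow> real" where
  "link_flow N f l = (\<Sum>i<N. f i l)"

definition link_cost :: "(real \<Rightarrow> real) \<Rightarrow> real \<Rightarrow> real \<Rightarrow> ereal" where
  "link_cost T cl x = (if x < cl then ereal (T (cl - x)) else \<infinity>)"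

definition user_strategy :: "nat \<Rightarrow> real \<Rightarrow> (nat \<Rightarrow> real) \<Rightarrow> bool" where
  "user_strategy L ri g \<longleftrightarrow> (\<forall>l<L. 0 \<le> g l) \<and> (\<Sum>l<L. g l) = ri"

definition feasible :: "nat \<Rightarrow> nat \<Rightarrow> (nat \<Rightarrow> real) \<Rightarrow> (nat \<Rightarrow> nat \<Rightarrow> real) set" where
  "feasible N L r = {f. \<forall>i<N. user_strategy L (r i) (f i)}"

definition user_cost ::
  "nat \<Rightarrow> nat \<Rightarrow> (real \<Rightarrow> real) \<Rightarrow> (nat \<Rightarrow> real) \<Rightarrow> nat \<Rightarrow> (nat \<Rightarrow> nat \<Rightarrow> real) \<Rightarrow> ereal" where
  "user_cost N L T c i f = (\<Sum>l<L. ereal (f i l) * link_cost T (c l) (link_flow N f l))"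

definition sys_cost ::
  "nat \<Rightarrow> nat \<Rightarrow> (real \<Rightarrow> real) \<Rightarrow> (nat \<Rightarrow> real) \<Rightarrow> (nat \<Rightarrow> real) \<Rightarrow> (nat \<Rightarrow> nat \<Rightarrow> real) \<Rightarrow> ereal" where
  "sys_cost N L T c \<alpha> f = (\<Sum>i<N. ereal (\<alpha> i) * user_cost N L T c i f)"

definition is_NEP ::
  "nat \<Rightarrow> nat \<Rightarrow> (real \<Rightarrow> real) \<Rightarrow> (nat \<Rightarrow> real) \<Rightarrow> (nat \<Rightarrow> real) \<Rightarrow> (nat \<Rightarrow> nat \<Rightarrow> real) \<Rightarrow> bool" where
  "is_NEP N L T c r f \<longleftrightarrow> f \<in> feasible N L r \<and>
     (\<forall>i<N. \<forall>g. user_strategy L (r i) g \<longrightarrow>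
        user_cost N L T c i f \<le> user_cost N L T c i (f(i := g)))"

definition bargain_set ::
  "nat \<Rightarrow> nat \<Rightarrow> (real \<Rightarrow> real) \<Rightarrow> (nat \<Rightarrow> real) \<Rightarrow> (nat \<Rightarrow> real) \<Rightarrow> (nat \<Rightarrow> ereal) set" where
  "bargain_set N L T c r = {g. \<exists>(M::nat) (p::nat \<Rightarrow> real) (fs::nat \<Rightarrow> nat \<Rightarrow> nat \<Rightarrow> real).
      (\<forall>m<M. 0 < p m) \<and> (\<Sum>m<M. p m) = 1 \<and> (\<forall>m<M. fs m \<in> feasible N L r) \<and>
      (\<forall>i<N. g i = (\<Sum>m<M. ereal (p m) * user_cost N L T c i (fs m)))}"

definition is_NBS ::
  "nat \<Rightarrow> nat \<Rightarrow> (real \<Rightarrow> real) \<Rightarrow> (nat \<Rightarrow> real) \<Rightarrow> (nat \<Rightarrow> real) \<Rightarrow> (nat \<Rightarrow> ereal) \<Rightarrow> (nat \<Rightarrow> ereal) \<Rightarrow> bool" where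
  "is_NBS N L T c r Jhat gt \<longleftrightarrow> gt \<in> bargain_set N L T c r \<and> (\<forall>i<N. gt i \<le> Jhat i) \<and>
     (\<forall>g \<in> bargain_set N L T c r. (\<forall>i<N. g i \<le> Jhat i) \<longrightarrow>
        (\<Prod>i<N. Jhat i - g i) \<le> (\<Prod>i<N. Jhat i - gt i))"

definition PoS ::
  "nat \<Rightarrow> nat \<Rightarrow> (real \<Rightarrow> real) \<Rightarrow> (nat \<Rightarrow> real) \<Rightarrow> (nat \<Rightarrow> real) \<Rightarrow> (nat \<Rightarrow> real) \<Rightarrow> (nat \<Rightarrow> ereal) \<Rightarrow> ereal" where
  "PoS N L T c r \<alpha> gt = (\<Sum>i<N. ereal (\<alpha> i) * gt i) / (INF f\<in>feasible N L r. sys_cost N L T c \<alpha> f)"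

definition C1_on :: "real set \<Rightarrow> (real \<Rightarrow> real) \<Rightarrow> bool" where
  "C1_on S h \<longleftrightarrow> (\<exists>D. (\<forall>x\<in>S. (h has_real_derivative D x) (at x within S)) \<and> continuous_on S D)"

end

theory Submission
  imports Defs
begin


lemma feas_nn: "f \<in> feasible N L r \<Longrightarrow> i < N \<Longrightarrow> l < L \<Longrightarrow> 0 \<le> f i l"
  by (auto simp: feasible_def user_strategy_def)

lemma feas_sum: "f \<in> feasible N L r \<Longrightarrow> i < N \<Longrightarrow> (\<Sum>l<L. f i l) = r i"
  by (auto simp: feasible_def user_strategy_def)

lemma link_flow_upd:
  assumes "i < N"
  shows "link_flow N (f(i := z)) l = link_flow N f l - f i l + z l"
proof -
  have "link_flow N (f(i := z)) l = (\<Sum>j\<in>{..<N}. (f(i := z)) j l)" by (simp add: link_flow_def)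
  also have "\<dots> = (f(i := z)) i l + (\<Sum>j\<in>{..<N} - {i}. (f(i := z)) j l)"
    using assms by (subst sum.remove[of _ i]) auto
  also have "(\<Sum>j\<in>{..<N} - {i}. (f(i := z)) j l) = (\<Sum>j\<in>{..<N} - {i}. f j l)"
    by (rule sum.cong) auto
  also have "\<dots> = link_flow N f l - f i l"
    using assms unfolding link_flow_def by (subst sum.remove[of _ i]) auto
  finally show ?thesis by (simp only: fun_upd_same)
qed

lemma others_nn:
  assumes "f \<in> feasible N L r" "i < N" "l < L"
  shows "0 \<le> link_flow N f l - f i l"
proof -
  have "link_flow N f l - f i l = (\<Sum>j\<in>{..<N} - {i}. f j l)"
    using assms unfolding link_flow_def by (subst sum.remove[of _ i]) auto
  also have "\<dots> \<ge> 0" using assms by (intro sum_nonneg) (auto intro: feas_nn)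
  finally show ?thesis .
qed

lemma link_flow_nn: "f \<in> feasible N L r \<Longrightarrow> l < L \<Longrightarrow> 0 \<le> link_flow N f l"
  unfolding link_flow_def by (auto intro!: sum_nonneg feas_nn)

lemma sum_link_flow: "f \<in> feasible N L r \<Longrightarrow> (\<Sum>l<L. link_flow N f l) = (\<Sum>i<N. r i)"
proof -
  assume f: "f \<in> feasible N L r"
  have "(\<Sum>l<L. link_flow N f l) = (\<Sum>l<L. \<Sum>i<N. f i l)" by (simp add: link_flow_def)
  also have "\<dots> = (\<Sum>i<N. \<Sum>l<L. f i l)" by (rule sum.swap)
  also have "\<dots> = (\<Sum>i<N. r i)" by (intro sum.cong refl) (simp add: feas_sum[OF f])
  finally show ?thesis .
qed

lemma uc_real:
  assumes "\<forall>l<L. 0 \<le> f i l" "\<forall>l<L. 0 < f i l \<longrightarrow> link_flow N f l < c l"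
  shows "user_cost N L T c i f = ereal (\<Sum>l<L. f i l * T (c l - link_flow N f l))"
  unfolding user_cost_def sum_ereal[symmetric]
proof (rule sum.cong)
  fix l assume l: "l \<in> {..<L}"
  show "ereal (f i l) * link_cost T (c l) (link_flow N f l) = ereal (f i l * T (c l - link_flow N f l))"
  proof (cases "f i l = 0")
    case True then show ?thesis by (simp add: zero_ereal_def[symmetric])
  next
    case False
    then have "0 < f i l" using assms l by force
    then show ?thesis using assms l by (simp add: link_cost_def)
  qed
qed simp

lemma link_cost_nonneg:
  assumes "\<forall>x\<in>{0..<cl}. 0 \<le> T (cl - x)" "0 \<le> x"
  shows "0 \<le> link_cost T cl x"
  using assms by (auto simp: link_cost_def)

lemma uc_term_nn:
  assumes f: "f \<in> feasible N L r" and i: "i < N" and l: "l < L"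
    and Tn: "\<forall>l<L. \<forall>x\<in>{0..<c l}. 0 \<le> T (c l - x)"
  shows "0 \<le> ereal (f i l) * link_cost T (c l) (link_flow N f l)"
proof -
  have "0 \<le> link_cost T (c l) (link_flow N f l)"
    using Tn l link_flow_nn[OF f l] by (intro link_cost_nonneg) auto
  moreover have "0 \<le> ereal (f i l)" using feas_nn[OF f i l] by simp
  ultimately show ?thesis by simp
qed

lemma user_cost_nonneg:
  assumes f: "f \<in> feasible N L r" and i: "i < N"
    and Tn: "\<forall>l<L. \<forall>x\<in>{0..<c l}. 0 \<le> T (c l - x)"
  shows "0 \<le> user_cost N L T c i f"
  unfolding user_cost_def using uc_term_nn[OF f i _ Tn] by (auto intro: sum_nonneg)

lemma uc_inf:
  assumes f: "f \<in> feasible N L r" and i: "i < N" and l: "l < L"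
    and Tn: "\<forall>l<L. \<forall>x\<in>{0..<c l}. 0 \<le> T (c l - x)"
    and pos: "0 < f i l" and over: "c l \<le> link_flow N f l"
  shows "user_cost N L T c i f = \<infinity>"
proof -
  have "ereal (f i l) * link_cost T (c l) (link_flow N f l) = \<infinity>"
    using pos over by (simp add: link_cost_def)
  moreover have "ereal (f i l) * link_cost T (c l) (link_flow N f l) \<le> user_cost N L T c i f"
    unfolding user_cost_def
    using sum_mono2[of "{..<L}" "{l}" "\<lambda>l. ereal (f i l) * link_cost T (c l) (link_flow N f l)"]
      l uc_term_nn[OF f i _ Tn] by auto
  ultimately show ?thesis by (metis ereal_infty_less_eq(1))
qed


lemma deviation:
  assumes NEP: "is_NEP N L T c r fhat"
    and f: "f \<in> feasible N L r"
    and good: "\<forall>l<L. link_flow N f l < c l"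
    and i: "i < N"
    and dem: "0 < r i"
    and mono: "\<forall>l<L. strict_mono_on {0..<c l} (\<lambda>x. T (c l - x))"
  shows "\<exists>z. (\<forall>l<L. 0 \<le> z l \<and> z l \<le> link_flow N f l) \<and> (\<Sum>l<L. z l) = r i \<and>
          user_cost N L T c i fhat \<le> ereal (\<Sum>l<L. z l * T (c l - link_flow N f l))"
proof -
  have fh: "fhat \<in> feasible N L r" using NEP by (simp add: is_NEP_def)
  define G where "G l = link_flow N f l" for l
  define oth where "oth l = link_flow N fhat l - fhat i l" for l
  define p where "p l = max 0 (G l - oth l)" for l
  define P where "P = (\<Sum>l<L. p l)"
  have oth_nn: "0 \<le> oth l" if "l < L" for l using others_nn[OF fh i that] by (simp add: oth_def)
  have G_nn: "0 \<le> G l" if "l < L" for l using link_flow_nn[OF f that] by (simp add: G_def)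
  have sumG: "(\<Sum>l<L. G l) = (\<Sum>j<N. r j)" using sum_link_flow[OF f] by (simp add: G_def)
  have sumo: "(\<Sum>l<L. oth l) = (\<Sum>j<N. r j) - r i"
    unfolding oth_def using sum_link_flow[OF fh] feas_sum[OF fh i] by (simp add: sum_subtractf)
  have "r i = (\<Sum>l<L. G l - oth l)" using sumG sumo by (simp add: sum_subtractf)
  also have "\<dots> \<le> P" unfolding P_def p_def by (intro sum_mono) auto
  finally have riP: "r i \<le> P" .
  then have Ppos: "0 < P" using dem by simp
  define z where "z l = r i * p l / P" for l
  have p_nn: "0 \<le> p l" for l by (simp add: p_def)
  have z_nn: "0 \<le> z l" for l using p_nn Ppos dem by (simp add: z_def)
  have z_le_p: "z l \<le> p l" for l
  proof -
    have "r i * p l \<le> P * p l" using riP p_nn by (intro mult_right_mono) auto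
    then show ?thesis using Ppos by (simp add: z_def divide_le_eq mult.commute)
  qed
  have p_le_G: "p l \<le> G l" if "l < L" for l using oth_nn[OF that] G_nn[OF that] by (simp add: p_def)
  have sumz: "(\<Sum>l<L. z l) = r i"
    unfolding z_def using Ppos by (simp add: sum_divide_distrib[symmetric] sum_distrib_left[symmetric] P_def)
  have strat: "user_strategy L (r i) z" using z_nn sumz by (simp add: user_strategy_def)
  have "user_cost N L T c i fhat \<le> user_cost N L T c i (fhat(i := z))"
    using NEP i strat by (simp add: is_NEP_def)
  also have "\<dots> \<le> ereal (\<Sum>l<L. z l * T (c l - G l))"
    unfolding user_cost_def sum_ereal[symmetric]
  proof (rule sum_mono)
    fix l assume l: "l \<in> {..<L}"
    have flow: "link_flow N (fhat(i := z)) l = oth l + z l"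
      using link_flow_upd[OF i, of fhat z l] by (simp add: oth_def)
    show "ereal ((fhat(i := z)) i l) * link_cost T (c l) (link_flow N (fhat(i := z)) l)
          \<le> ereal (z l * T (c l - G l))"
    proof (cases "z l = 0")
      case True then show ?thesis by (simp add: zero_ereal_def[symmetric])
    next
      case False
      then have zp: "0 < z l" using z_nn[of l] by simp
      then have "0 < p l" using z_le_p[of l] by simp
      then have pe: "p l = G l - oth l" by (simp add: p_def)
      have Gc: "G l < c l" using good l by (simp add: G_def)
      have le: "oth l + z l \<le> G l" using z_le_p[of l] pe by simp
      have ge: "0 \<le> oth l + z l" using oth_nn[of l] z_nn[of l] l by simp
      have "T (c l - (oth l + z l)) \<le> T (c l - G l)"
        using strict_mono_on_leD[OF mono[rule_format, of l], of "oth l + z l" "G l"] l le ge Gc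
        by auto
      then have "z l * T (c l - (oth l + z l)) \<le> z l * T (c l - G l)"
        using zp by (intro mult_left_mono) auto
      then show ?thesis using flow le Gc by (simp add: link_cost_def)
    qed
  qed
  finally show ?thesis using z_nn z_le_p p_le_G sumz unfolding G_def
    by (intro exI[of _ z]) (auto intro: order_trans)
qed


lemma two_sum: "(\<Sum>i<(2::nat). h i) = h 0 + h 1"
  by (simp add: numeral_2_eq_2)
lemma two_prod: "(\<Prod>i<(2::nat). h i) = h 0 * h 1"
  by (simp add: numeral_2_eq_2)

lemma lin_aux: fixes a b s t J0 J1 :: real
  assumes tD: "t * ((2 * a - s) - (s - 2 * b)) = (J0 - J1) - (s - 2 * b)"
  shows "t * a + (1 - t) * (s - b) = J0 - (J0 + J1 - s) / 2"
    and "t * (s - a) + (1 - t) * b = J1 - (J0 + J1 - s) / 2"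
proof -
  obtain p q w :: real where pqw: "p = t * a" "q = t * b" "w = t * s" by blast
  have e: "2*p + 2*q - 2*w = (J0 - J1) - (s - 2 * b)" using tD pqw by (simp add: algebra_simps)
  have e1: "t * a + (1 - t) * (s - b) = p + s - b - w + q" using pqw by (simp add: algebra_simps)
  have e2: "t * (s - a) + (1 - t) * b = w - p + b - q" using pqw by (simp add: algebra_simps)
  show "t * a + (1 - t) * (s - b) = J0 - (J0 + J1 - s) / 2" unfolding e1 using e by (simp add: field_simps)
  show "t * (s - a) + (1 - t) * b = J1 - (J0 + J1 - s) / 2" unfolding e2 using e by (simp add: field_simps)
qed

lemma cost_on_G:
  assumes "A \<in> feasible N L r" "\<forall>l<L. link_flow N A l = G l" "\<forall>l<L. G l < c l" "i < N"
  shows "user_cost N L T c i A = ereal (\<Sum>l<L. A i l * T (c l - G l))"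
proof -
  have nn: "\<forall>l<L. 0 \<le> A i l" using feas_nn[OF assms(1) assms(4)] by blast
  have lt: "\<forall>l<L. 0 < A i l \<longrightarrow> link_flow N A l < c l" using assms(2,3) by simp
  have "user_cost N L T c i A = ereal (\<Sum>l<L. A i l * T (c l - link_flow N A l))"
    using uc_real[OF nn lt] .
  also have "(\<Sum>l<L. A i l * T (c l - link_flow N A l)) = (\<Sum>l<L. A i l * T (c l - G l))"
    using assms(2) by (intro sum.cong) auto
  finally show ?thesis .
qed

lemma case_two:
  assumes N2: "N = 2"
    and NEP: "is_NEP N L T c r fhat"
    and NBS: "is_NBS N L T c r (\<lambda>i. user_cost N L T c i fhat) gt"
    and f: "f \<in> feasible N L r"
    and good: "\<forall>l<L. link_flow N f l < c l"
    and dem: "\<forall>i<N. 0 < r i"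
    and mono: "\<forall>l<L. strict_mono_on {0..<c l} (\<lambda>x. T (c l - x))"
    and Tn: "\<forall>l<L. \<forall>x\<in>{0..<c l}. 0 \<le> T (c l - x)"
  shows "(\<Sum>i<N. gt i) \<le> (\<Sum>i<N. user_cost N L T c i f)"
proof -
  have fh: "fhat \<in> feasible N L r" using NEP by (simp add: is_NEP_def)
  define G where "G l = link_flow N f l" for l
  define \<tau> where "\<tau> l = T (c l - G l)" for l
  define s where "s = (\<Sum>l<L. G l * \<tau> l)"
  have Gc: "\<forall>l<L. G l < c l" using good by (simp add: G_def)
  have G_nn: "0 \<le> G l" if "l < L" for l using link_flow_nn[OF f that] by (simp add: G_def)
  have sumG: "(\<Sum>l<L. G l) = r 0 + r 1" using sum_link_flow[OF f] N2 by (simp add: G_def two_sum)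
  have Jf: "user_cost N L T c i f = ereal (\<Sum>l<L. f i l * \<tau> l)" if "i < N" for i
    using cost_on_G[OF f _ Gc that] by (simp add: G_def \<tau>_def)
  have Sf: "(\<Sum>i<N. user_cost N L T c i f) = ereal s"
  proof -
    have "(\<Sum>i<N. user_cost N L T c i f) = ereal (\<Sum>i<N. \<Sum>l<L. f i l * \<tau> l)"
      using Jf by (simp del: sum_ereal add: sum_ereal[symmetric])
    also have "(\<Sum>i<N. \<Sum>l<L. f i l * \<tau> l) = (\<Sum>l<L. \<Sum>i<N. f i l * \<tau> l)" by (rule sum.swap)
    also have "\<dots> = s" by (simp add: s_def G_def link_flow_def sum_distrib_right)
    finally show ?thesis .
  qed
  obtain z0 where z0: "\<forall>l<L. 0 \<le> z0 l \<and> z0 l \<le> G l" "(\<Sum>l<L. z0 l) = r 0"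
      "user_cost N L T c 0 fhat \<le> ereal (\<Sum>l<L. z0 l * \<tau> l)"
    using deviation[OF NEP f good _ _ mono, of 0] dem N2 unfolding G_def \<tau>_def by auto
  obtain z1 where z1: "\<forall>l<L. 0 \<le> z1 l \<and> z1 l \<le> G l" "(\<Sum>l<L. z1 l) = r 1"
      "user_cost N L T c 1 fhat \<le> ereal (\<Sum>l<L. z1 l * \<tau> l)"
    using deviation[OF NEP f good _ _ mono, of 1] dem N2 unfolding G_def \<tau>_def by auto
  define a where "a = (\<Sum>l<L. z0 l * \<tau> l)"
  define b where "b = (\<Sum>l<L. z1 l * \<tau> l)"
  have Jh_nn: "0 \<le> user_cost N L T c i fhat" if "i < N" for i
    using user_cost_nonneg[OF fh that Tn] .
  obtain J0 where J0: "user_cost N L T c 0 fhat = ereal J0"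
    using z0(3) Jh_nn[of 0] N2 by (cases "user_cost N L T c 0 fhat") auto
  obtain J1 where J1: "user_cost N L T c 1 fhat = ereal J1"
    using z1(3) Jh_nn[of 1] N2 by (cases "user_cost N L T c 1 fhat") auto
  have J0a: "J0 \<le> a" using z0(3) J0 by (simp add: a_def)
  have J1b: "J1 \<le> b" using z1(3) J1 by (simp add: b_def)
  have gtB: "gt \<in> bargain_set N L T c r" and gtle: "\<forall>i<N. gt i \<le> user_cost N L T c i fhat"
    and gtopt: "\<forall>g\<in>bargain_set N L T c r. (\<forall>i<N. g i \<le> user_cost N L T c i fhat) \<longrightarrow>
        (\<Prod>i<N. user_cost N L T c i fhat - g i) \<le> (\<Prod>i<N. user_cost N L T c i fhat - gt i)"
    using NBS by (auto simp: is_NBS_def)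
  have gt_nn: "0 \<le> gt i" if "i < N" for i
  proof -
    obtain Mm :: nat and p fs where p: "\<forall>m<Mm. 0 < p m" and fs: "\<forall>m<Mm. fs m \<in> feasible N L r"
      and g: "\<forall>i<N. gt i = (\<Sum>m<Mm. ereal (p m) * user_cost N L T c i (fs m))"
      using gtB unfolding bargain_set_def mem_Collect_eq by blast
    have "0 \<le> ereal (p m) * user_cost N L T c i (fs m)" if m: "m < Mm" for m
    proof -
      have "0 \<le> user_cost N L T c i (fs m)"
        using user_cost_nonneg[OF fs[rule_format, OF m] \<open>i < N\<close> Tn] .
      moreover have "0 \<le> ereal (p m)" using p m by (simp add: less_imp_le)
      ultimately show ?thesis by simp
    qed
    then show ?thesis using g that by (auto intro!: sum_nonneg)
  qed
  obtain g0 where g0: "gt 0 = ereal g0"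
  proof -
    have "gt 0 \<le> ereal J0" using gtle[rule_format, of 0] J0 N2 by simp
    then show ?thesis using gt_nn[of 0] N2 that by (cases "gt 0") auto
  qed
  obtain g1 where g1: "gt 1 = ereal g1"
  proof -
    have "gt 1 \<le> ereal J1" using gtle[rule_format, of 1] J1 N2 by simp
    then show ?thesis using gt_nn[of 1] N2 that by (cases "gt 1") auto
  qed
  have g0J: "g0 \<le> J0" using gtle[rule_format, of 0] g0 J0 N2 by simp
  have g1J: "g1 \<le> J1" using gtle[rule_format, of 1] g1 J1 N2 by simp
  show ?thesis
  proof (rule ccontr)
    assume "\<not> ?thesis"
    then have sg: "s < g0 + g1" using Sf g0 g1 N2 by (simp add: two_sum)
    define A :: "nat \<Rightarrow> nat \<Rightarrow> real" where "A i l = (if i = 0 then z0 l else G l - z0 l)" for i l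
    define B :: "nat \<Rightarrow> nat \<Rightarrow> real" where "B i l = (if i = 0 then G l - z1 l else z1 l)" for i l
    have sumGz0: "(\<Sum>l<L. G l - z0 l) = r 1" using sumG z0(2) by (simp add: sum_subtractf)
    have sumGz1: "(\<Sum>l<L. G l - z1 l) = r 0" using sumG z1(2) by (simp add: sum_subtractf)
    have Af: "A \<in> feasible N L r" using N2 z0 sumGz0
      by (auto simp: feasible_def user_strategy_def A_def less_2_cases_iff)
    have Bf: "B \<in> feasible N L r" using N2 z1 sumGz1
      by (auto simp: feasible_def user_strategy_def B_def less_2_cases_iff)
    have Aflow: "\<forall>l<L. link_flow N A l = G l" using N2 by (simp add: link_flow_def two_sum A_def)
    have Bflow: "\<forall>l<L. link_flow N B l = G l" using N2 by (simp add: link_flow_def two_sum B_def)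
    have cA0: "user_cost N L T c 0 A = ereal a"
      using cost_on_G[OF Af Aflow Gc, of 0] N2 by (simp add: A_def a_def \<tau>_def)
    have cA1: "user_cost N L T c 1 A = ereal (s - a)"
      using cost_on_G[OF Af Aflow Gc, of 1] N2 by (simp add: A_def a_def \<tau>_def[symmetric] s_def left_diff_distrib sum_subtractf)
    have cB0: "user_cost N L T c 0 B = ereal (s - b)"
      using cost_on_G[OF Bf Bflow Gc, of 0] N2 by (simp add: B_def b_def \<tau>_def[symmetric] s_def left_diff_distrib sum_subtractf)
    have cB1: "user_cost N L T c 1 B = ereal b"
      using cost_on_G[OF Bf Bflow Gc, of 1] N2 by (simp add: B_def b_def \<tau>_def)
    define \<Delta> where "\<Delta> = J0 - J1"
    define t where "t = (\<Delta> - (s - 2 * b)) / ((2 * a - s) - (s - 2 * b))"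
    have sJ: "s < J0 + J1" using sg g0J g1J by simp
    have lo: "s - 2 * b < \<Delta>" using sJ J1b by (simp add: \<Delta>_def)
    have hi: "\<Delta> < 2 * a - s" using sJ J0a by (simp add: \<Delta>_def)
    have t0: "0 < t" and t1: "t < 1" using lo hi by (simp_all add: t_def divide_simps)
    have tD: "t * ((2 * a - s) - (s - 2 * b)) = \<Delta> - (s - 2 * b)"
      using lo hi by (simp add: t_def)
    define h where "h i = ereal t * user_cost N L T c i A + ereal (1 - t) * user_cost N L T c i B" for i
    define \<gamma> where "\<gamma> = (J0 + J1 - s) / 2"
    have h0: "h 0 = ereal (J0 - \<gamma>)"
    proof -
      have "h 0 = ereal (t * a + (1 - t) * (s - b))" by (simp add: h_def cA0 cB0)
      also have "t * a + (1 - t) * (s - b) = J0 - \<gamma>"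
        using lin_aux(1)[OF tD[unfolded \<Delta>_def]] by (simp add: \<gamma>_def)
      finally show ?thesis .
    qed
    have h1: "h 1 = ereal (J1 - \<gamma>)"
    proof -
      have "h 1 = ereal (t * (s - a) + (1 - t) * b)" unfolding h_def cA1 cB1 by simp
      also have "t * (s - a) + (1 - t) * b = J1 - \<gamma>"
        using lin_aux(2)[OF tD[unfolded \<Delta>_def]] by (simp add: \<gamma>_def)
      finally show ?thesis .
    qed
    have hB: "h \<in> bargain_set N L T c r"
      unfolding bargain_set_def
    proof (intro CollectI exI[of _ "2::nat"] exI[of _ "\<lambda>m. if m = 0 then t else 1 - t"]
        exI[of _ "\<lambda>m. if m = 0 then A else B"] conjI)
      show "\<forall>m<(2::nat). 0 < (if m = 0 then t else 1 - t)" using t0 t1 by simp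
      show "(\<Sum>m<(2::nat). if m = 0 then t else 1 - t) = 1" by (simp add: two_sum)
      show "\<forall>m<(2::nat). (if m = 0 then A else B) \<in> feasible N L r" using Af Bf by simp
      show "\<forall>i<N. h i = (\<Sum>m<(2::nat). ereal (if m = 0 then t else 1 - t) * user_cost N L T c i (if m = 0 then A else B))"
        by (simp add: two_sum h_def)
    qed
    have gpos: "0 < \<gamma>" using sJ by (simp add: \<gamma>_def)
    have hle: "\<forall>i<N. h i \<le> user_cost N L T c i fhat"
      using N2 h0 h1 J0 J1 gpos by (auto simp: less_2_cases_iff)
    have "(\<Prod>i<N. user_cost N L T c i fhat - h i) \<le> (\<Prod>i<N. user_cost N L T c i fhat - gt i)"
      using gtopt hB hle by blast
    then have "(ereal J0 - ereal (J0 - \<gamma>)) * (ereal J1 - ereal (J1 - \<gamma>)) \<le> (ereal J0 - ereal g0) * (ereal J1 - ereal g1)"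
      unfolding N2 two_prod h0 h1 J0[unfolded N2] J1[unfolded N2] g0 g1 .
    then have ineq: "\<gamma> * \<gamma> \<le> (J0 - g0) * (J1 - g1)" by simp
    define u where "u = J0 - g0"
    define v where "v = J1 - g1"
    have uv: "u * v \<le> ((u + v) / 2)^2"
      using sum_squares_ge_zero[of "u - v" 0] by (simp add: power2_eq_square algebra_simps)
    have "0 \<le> (u + v) / 2" using g0J g1J by (simp add: u_def v_def)
    moreover have "(u + v) / 2 < \<gamma>" using sg by (simp add: u_def v_def \<gamma>_def)
    ultimately have "((u + v) / 2)^2 < \<gamma>^2" by (intro power_strict_mono) auto
    then show False using ineq uv by (simp add: u_def v_def power2_eq_square)
  qed
qed


lemma endpoint_deriv:
  fixes \<psi> :: "real \<Rightarrow> real"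
  assumes d: "(\<psi> has_real_derivative d) (at 0 within {0..e})" and e: "0 < e"
    and mn: "\<forall>t\<in>{0..e}. \<psi> 0 \<le> \<psi> t"
  shows "0 \<le> d"
proof -
  have lim: "((\<lambda>y. (\<psi> y - \<psi> 0) / (y - 0)) \<longlongrightarrow> d) (at 0 within {0..e})"
    using d has_field_derivative_iff by blast
  have ev: "eventually (\<lambda>y. 0 \<le> (\<psi> y - \<psi> 0) / (y - 0)) (at 0 within {0..e})"
    unfolding eventually_at_filter using mn by (auto intro!: always_eventually divide_nonneg_nonneg)
  have nb: "at (0::real) within {0..e} \<noteq> bot" using e by (simp add: at_within_Icc_at_right)
  show ?thesis using tendsto_lowerbound[OF lim ev nb] .
qed

lemma deriv_nonneg_mono:
  fixes h :: "real \<Rightarrow> real"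
  assumes mono: "strict_mono_on {0..<c} h" and d: "(h has_real_derivative d) (at v within {0..<c})"
    and v: "v \<in> {0..<c}"
  shows "0 \<le> d"
proof -
  define e where "e = (c - v) / 2"
  have e: "0 < e" using v by (simp add: e_def)
  have sub: "(\<lambda>t. v + t) ` {0..e} \<subseteq> {0..<c}" using v by (auto simp: e_def field_simps)
  have d1: "(h has_real_derivative d) (at ((\<lambda>t. v + t) 0) within ((\<lambda>t. v + t) ` {0..e}))"
    using DERIV_subset[OF d sub] by simp
  have d2: "((\<lambda>t. v + t) has_real_derivative 1) (at 0 within {0..e})"
    by (auto intro!: derivative_eq_intros)
  have "((h \<circ> (\<lambda>t. v + t)) has_real_derivative d * 1) (at 0 within {0..e})"
    using DERIV_image_chain[OF d1 d2] .
  then have dd: "((\<lambda>t. h (v + t)) has_real_derivative d) (at 0 within {0..e})" by (simp add: o_def)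
  have "\<forall>t\<in>{0..e}. h (v + 0) \<le> h (v + t)"
  proof
    fix t assume t: "t \<in> {0..e}"
    then have "v + t \<in> (\<lambda>t. v + t) ` {0..e}" by (rule imageI)
    then have "v + t \<in> {0..<c}" using sub by blast
    then show "h (v + 0) \<le> h (v + t)" using t v by (intro strict_mono_on_leD[OF mono]) auto
  qed
  then show ?thesis using endpoint_deriv[OF dd e] by simp
qed


lemma pair_le_flow:
  assumes f: "f \<in> feasible N L r" and i: "i < N" and j: "j < N" and ij: "i \<noteq> j" and l: "l < L"
  shows "f i l + f j l \<le> link_flow N f l"
proof -
  have "link_flow N f l = f i l + (\<Sum>k\<in>{..<N} - {i}. f k l)"
    using i unfolding link_flow_def by (subst sum.remove[of _ i]) auto
  moreover have "f j l \<le> (\<Sum>k\<in>{..<N} - {i}. f k l)"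
    using sum_mono2[of "{..<N} - {i}" "{j}" "\<lambda>k. f k l"] j ij feas_nn[OF f _ l] by auto
  ultimately show ?thesis by simp
qed

lemma nep_vi:
  assumes NEP: "is_NEP N L T c r fhat"
    and i: "i < N" and j: "j < N" and ij: "i \<noteq> j" and rij: "r i = r j"
    and fin: "\<forall>l<L. (0 < fhat i l \<or> 0 < fhat j l) \<longrightarrow> link_flow N fhat l < c l"
    and Dd: "\<forall>l<L. \<forall>v\<in>{0..<c l}. ((\<lambda>x. T (c l - x)) has_real_derivative Dd l v) (at v within {0..<c l})"
  shows "0 \<le> (\<Sum>l<L. (fhat j l - fhat i l) * T (c l - link_flow N fhat l)
              + fhat i l * (Dd l (link_flow N fhat l) * (fhat j l - fhat i l)))"
proof -
  have fh: "fhat \<in> feasible N L r" using NEP by (simp add: is_NEP_def)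
  define x where "x = fhat i"
  define y where "y = fhat j"
  define F where "F l = link_flow N fhat l" for l
  define \<delta> where "\<delta> l = y l - x l" for l
  have xnn: "0 \<le> x l" if "l < L" for l using feas_nn[OF fh i that] by (simp add: x_def)
  have ynn: "0 \<le> y l" if "l < L" for l using feas_nn[OF fh j that] by (simp add: y_def)
  have xyF: "x l + y l \<le> F l" if "l < L" for l
    using pair_le_flow[OF fh i j ij that] by (simp add: x_def y_def F_def)
  define U where "U = {l\<in>{..<L}. 0 < x l \<or> 0 < y l}"
  have finU: "finite U" by (simp add: U_def)
  have notU: "x l = 0 \<and> y l = 0" if "l < L" "l \<notin> U" for l
    using that xnn[OF that(1)] ynn[OF that(1)] by (auto simp: U_def)
  have FcU: "F l < c l" if "l \<in> U" for l using that fin by (auto simp: U_def x_def y_def F_def)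
  define \<epsilon> where "\<epsilon> l = (c l - F l) / (\<bar>\<delta> l\<bar> + 1)" for l
  define t0 where "t0 = Min (insert 1 (\<epsilon> ` U))"
  have t0pos: "0 < t0"
    unfolding t0_def using finU FcU by (subst Min_gr_iff) (auto simp: \<epsilon>_def)
  have t0le1: "t0 \<le> 1" unfolding t0_def using finU by (auto intro: Min_le)
  have t0eps: "t0 \<le> \<epsilon> l" if "l \<in> U" for l unfolding t0_def using finU that by (auto intro: Min_le)
  have flow_lt: "F l + t * \<delta> l < c l" if l: "l \<in> U" and t: "t \<in> {0..t0}" for l t
  proof -
    have pos: "0 < c l - F l" using FcU[OF l] by simp
    have "t * \<delta> l \<le> t * \<bar>\<delta> l\<bar>" using t by (intro mult_left_mono) auto
    also have "\<dots> \<le> \<epsilon> l * \<bar>\<delta> l\<bar>" using t t0eps[OF l] by (intro mult_right_mono) auto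
    also have "\<epsilon> l * \<bar>\<delta> l\<bar> < c l - F l"
    proof -
      have "(c l - F l) * \<bar>\<delta> l\<bar> < (c l - F l) * (\<bar>\<delta> l\<bar> + 1)" using pos by simp
      moreover have "0 < \<bar>\<delta> l\<bar> + 1" by simp
      ultimately show ?thesis unfolding \<epsilon>_def by (simp add: pos_divide_less_eq mult.commute)
    qed
    finally show ?thesis by simp
  qed
  have flow_ge: "0 \<le> F l + t * \<delta> l" if l: "l < L" and t: "t \<in> {0..1}" for l t
  proof -
    have "F l + t * \<delta> l = (F l - x l - y l) + (1 - t) * x l + (1 + t) * y l"
      by (simp add: \<delta>_def algebra_simps)
    moreover have "0 \<le> (1 - t) * x l" using t xnn[OF l] by simp
    moreover have "0 \<le> (1 + t) * y l" using t ynn[OF l] by simp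
    ultimately show ?thesis using xyF[OF l] by simp
  qed
  define z where "z t l = x l + t * \<delta> l" for t l
  define \<phi> where "\<phi> t = (\<Sum>l<L. (x l + t * \<delta> l) * T (c l - (F l + t * \<delta> l)))" for t
  have z_nn: "0 \<le> z t l" if l: "l < L" and t: "t \<in> {0..1}" for t l
  proof -
    have "z t l = (1 - t) * x l + t * y l" by (simp add: z_def \<delta>_def algebra_simps)
    then show ?thesis using t xnn[OF l] ynn[OF l] by simp
  qed
  have z_sum: "(\<Sum>l<L. z t l) = r i" for t
  proof -
    have "(\<Sum>l<L. z t l) = (\<Sum>l<L. x l) + t * ((\<Sum>l<L. y l) - (\<Sum>l<L. x l))"
      by (simp add: z_def \<delta>_def sum.distrib sum_distrib_left sum_subtractf algebra_simps)
    then show ?thesis using feas_sum[OF fh i] feas_sum[OF fh j] rij by (simp add: x_def y_def)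
  qed
  have cost_t: "user_cost N L T c i (fhat(i := z t)) = ereal (\<phi> t)" if t: "t \<in> {0..t0}" for t
  proof -
    have t1: "t \<in> {0..1}" using t t0le1 by auto
    have flowz: "link_flow N (fhat(i := z t)) l = F l + t * \<delta> l" for l
      using link_flow_upd[OF i, of fhat "z t" l] by (simp add: F_def z_def x_def)
    have nn: "\<forall>l<L. 0 \<le> (fhat(i := z t)) i l" using z_nn t1 by simp
    have lt: "\<forall>l<L. 0 < (fhat(i := z t)) i l \<longrightarrow> link_flow N (fhat(i := z t)) l < c l"
    proof (intro allI impI)
      fix l assume l: "l < L" and p: "0 < (fhat(i := z t)) i l"
      have "l \<in> U"
      proof (rule ccontr)
        assume "l \<notin> U"
        then have "z t l = 0" using notU[OF l] by (simp add: z_def \<delta>_def)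
        then show False using p by simp
      qed
      then show "link_flow N (fhat(i := z t)) l < c l" using flow_lt t by (simp add: flowz)
    qed
    have "user_cost N L T c i (fhat(i := z t)) = ereal (\<Sum>l<L. (fhat(i := z t)) i l * T (c l - link_flow N (fhat(i := z t)) l))"
      using uc_real[OF nn lt] .
    also have "(\<Sum>l<L. (fhat(i := z t)) i l * T (c l - link_flow N (fhat(i := z t)) l)) = \<phi> t"
      unfolding \<phi>_def by (intro sum.cong refl) (simp only: fun_upd_same flowz z_def)
    finally show ?thesis .
  qed
  have cost_0: "user_cost N L T c i fhat = ereal (\<phi> 0)"
  proof -
    have "z 0 = fhat i" by (rule ext) (simp add: z_def x_def)
    then have "fhat(i := z 0) = fhat" by simp
    then show ?thesis using cost_t[of 0] t0pos by simp
  qed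
  have mn: "\<forall>t\<in>{0..t0}. \<phi> 0 \<le> \<phi> t"
  proof
    fix t assume t: "t \<in> {0..t0}"
    have strat: "user_strategy L (r i) (z t)"
      using z_nn z_sum t t0le1 by (auto simp: user_strategy_def)
    have "user_cost N L T c i fhat \<le> user_cost N L T c i (fhat(i := z t))"
      using NEP i strat by (simp add: is_NEP_def)
    then show "\<phi> 0 \<le> \<phi> t" using cost_0 cost_t[OF t] by simp
  qed
  define V where "V = (\<Sum>l<L. \<delta> l * T (c l - F l) + x l * (Dd l (F l) * \<delta> l))"
  have dterm: "((\<lambda>t. (x l + t * \<delta> l) * T (c l - (F l + t * \<delta> l))) has_real_derivative
      (\<delta> l * T (c l - F l) + x l * (Dd l (F l) * \<delta> l))) (at 0 within {0..t0})" if l: "l \<in> {..<L}" for l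
  proof (cases "\<delta> l = 0")
    case True
    have "((\<lambda>t. x l * T (c l - F l)) has_real_derivative 0) (at 0 within {0..t0})"
      by (rule DERIV_const)
    then show ?thesis using True by simp
  next
    case False
    then have lU: "l \<in> U" using notU[of l] l unfolding \<delta>_def by (metis lessThan_iff diff_self)
    define a where "a t = F l + t * \<delta> l" for t
    have Fin: "F l \<in> {0..<c l}" using FcU[OF lU] link_flow_nn[OF fh, of l] l by (simp add: F_def)
    have sub: "a ` {0..t0} \<subseteq> {0..<c l}"
    proof
      fix w assume "w \<in> a ` {0..t0}"
      then obtain t where t: "t \<in> {0..t0}" and w: "w = a t" by auto
      have "0 \<le> a t" using flow_ge[of l t] l t t0le1 by (simp add: a_def)
      moreover have "a t < c l" using flow_lt[OF lU t] by (simp add: a_def)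
      ultimately show "w \<in> {0..<c l}" using w by simp
    qed
    have dg: "((\<lambda>v. T (c l - v)) has_real_derivative Dd l (F l)) (at (a 0) within (a ` {0..t0}))"
      using DERIV_subset[OF Dd[rule_format, of l "F l"] sub] l Fin by (simp add: a_def)
    have da: "(a has_real_derivative \<delta> l) (at 0 within {0..t0})"
      unfolding a_def by (auto intro!: derivative_eq_intros)
    have dc: "(((\<lambda>v. T (c l - v)) \<circ> a) has_real_derivative Dd l (F l) * \<delta> l) (at 0 within {0..t0})"
      by (rule DERIV_image_chain[OF dg da])
    have du: "((\<lambda>t. x l + t * \<delta> l) has_real_derivative \<delta> l) (at 0 within {0..t0})"
      by (auto intro!: derivative_eq_intros)
    have "((\<lambda>t. (x l + t * \<delta> l) * ((\<lambda>v. T (c l - v)) \<circ> a) t) has_real_derivative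
        \<delta> l * ((\<lambda>v. T (c l - v)) \<circ> a) 0 + Dd l (F l) * \<delta> l * (x l + 0 * \<delta> l)) (at 0 within {0..t0})"
      by (rule DERIV_mult[OF du dc])
    then show ?thesis by (simp add: a_def o_def algebra_simps)
  qed
  have "(\<phi> has_real_derivative V) (at 0 within {0..t0})"
    unfolding \<phi>_def V_def by (rule DERIV_sum) (rule dterm)
  then have "0 \<le> V" using endpoint_deriv[OF _ t0pos mn] by blast
  then show ?thesis by (simp add: V_def \<delta>_def x_def y_def F_def)
qed


lemma nep_sym:
  assumes NEP: "is_NEP N L T c r fhat"
    and i: "i < N" and j: "j < N" and ij: "i \<noteq> j" and rij: "r i = r j"
    and fin: "\<forall>l<L. (0 < fhat i l \<or> 0 < fhat j l) \<longrightarrow> link_flow N fhat l < c l"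
    and mono: "\<forall>l<L. strict_mono_on {0..<c l} (\<lambda>x. T (c l - x))"
    and C1: "\<forall>l<L. C1_on {0..<c l} (\<lambda>x. T (c l - x))"
  shows "user_cost N L T c i fhat = user_cost N L T c j fhat"
proof -
  have fh: "fhat \<in> feasible N L r" using NEP by (simp add: is_NEP_def)
  have "\<forall>l. \<exists>D. l < L \<longrightarrow> (\<forall>v\<in>{0..<c l}. ((\<lambda>x. T (c l - x)) has_real_derivative D v) (at v within {0..<c l}))"
    using C1 unfolding C1_on_def by metis
  then obtain Dd where Dd: "\<forall>l<L. \<forall>v\<in>{0..<c l}. ((\<lambda>x. T (c l - x)) has_real_derivative Dd l v) (at v within {0..<c l})"
    by metis
  have fin2: "\<forall>l<L. (0 < fhat j l \<or> 0 < fhat i l) \<longrightarrow> link_flow N fhat l < c l" using fin by blast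
  define x where "x = fhat i"
  define y where "y = fhat j"
  define F where "F l = link_flow N fhat l" for l
  define g where "g l = T (c l - F l)" for l
  define D where "D l = Dd l (F l)" for l
  have vi1: "0 \<le> (\<Sum>l<L. (y l - x l) * g l + x l * (D l * (y l - x l)))"
    using nep_vi[OF NEP i j ij rij fin Dd] by (simp add: x_def y_def F_def g_def D_def)
  have vi2: "0 \<le> (\<Sum>l<L. (x l - y l) * g l + y l * (D l * (x l - y l)))"
    using nep_vi[OF NEP j i ij[symmetric] rij[symmetric] fin2 Dd] by (simp add: x_def y_def F_def g_def D_def)
  have Dsq: "0 \<le> D l * (y l - x l)^2" if l: "l < L" for l
  proof (cases "y l = x l")
    case True then show ?thesis by simp
  next
    case False
    have xnn: "0 \<le> x l" and ynn: "0 \<le> y l" using feas_nn[OF fh i l] feas_nn[OF fh j l] by (auto simp: x_def y_def)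
    then have "0 < x l \<or> 0 < y l" using False by auto
    then have Fc: "F l < c l" using fin l by (auto simp: x_def y_def F_def)
    have Fin: "F l \<in> {0..<c l}" using Fc link_flow_nn[OF fh l] by (simp add: F_def)
    have "0 \<le> D l" unfolding D_def
      using deriv_nonneg_mono[OF mono[rule_format, OF l] Dd[rule_format, OF l Fin] Fin] .
    then show ?thesis by simp
  qed
  have sumeq: "(\<Sum>l<L. (y l - x l) * g l + x l * (D l * (y l - x l))) +
      (\<Sum>l<L. (x l - y l) * g l + y l * (D l * (x l - y l))) = - (\<Sum>l<L. D l * (y l - x l)^2)"
    by (simp add: sum.distrib[symmetric] sum_negf[symmetric] power2_eq_square algebra_simps)
  have "(\<Sum>l<L. D l * (y l - x l)^2) = 0"
  proof -
    have "(\<Sum>l<L. D l * (y l - x l)^2) \<le> 0" using vi1 vi2 sumeq by linarith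
    moreover have "0 \<le> (\<Sum>l<L. D l * (y l - x l)^2)" using Dsq by (intro sum_nonneg) auto
    ultimately show ?thesis by simp
  qed
  then have z: "D l * (y l - x l)^2 = 0" if "l < L" for l
    using sum_nonneg_eq_0_iff[of "{..<L}" "\<lambda>l. D l * (y l - x l)^2"] Dsq that by auto
  have zD: "D l * (y l - x l) = 0" if "l < L" for l
    using z[OF that] by (auto simp: power2_eq_square)
  have s1: "(\<Sum>l<L. (y l - x l) * g l + x l * (D l * (y l - x l))) = (\<Sum>l<L. (y l - x l) * g l)"
    by (intro sum.cong refl) (simp add: zD)
  have s2: "(\<Sum>l<L. (x l - y l) * g l + y l * (D l * (x l - y l))) = - (\<Sum>l<L. (y l - x l) * g l)"
  proof -
    have "(\<Sum>l<L. (x l - y l) * g l + y l * (D l * (x l - y l))) = (\<Sum>l<L. - ((y l - x l) * g l))"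
    proof (intro sum.cong refl)
      fix l assume l: "l \<in> {..<L}"
      have "D l * (x l - y l) = - (D l * (y l - x l))" by (simp add: algebra_simps)
      also have "\<dots> = 0" using zD[of l] l by simp
      finally have e: "D l * (x l - y l) = 0" .
      show "(x l - y l) * g l + y l * (D l * (x l - y l)) = - ((y l - x l) * g l)"
        unfolding e by (simp add: algebra_simps)
    qed
    then show ?thesis by (simp add: sum_negf)
  qed
  have "(\<Sum>l<L. (y l - x l) * g l) = 0" using vi1 vi2 s1 s2 by linarith
  then have eqs: "(\<Sum>l<L. x l * g l) = (\<Sum>l<L. y l * g l)"
    by (simp add: left_diff_distrib sum_subtractf)
  have ci: "user_cost N L T c i fhat = ereal (\<Sum>l<L. x l * g l)"
    using uc_real[of L fhat i N c T] feas_nn[OF fh i] fin by (simp add: x_def g_def F_def)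
  have cj: "user_cost N L T c j fhat = ereal (\<Sum>l<L. y l * g l)"
    using uc_real[of L fhat j N c T] feas_nn[OF fh j] fin by (simp add: y_def g_def F_def)
  show ?thesis using ci cj eqs by simp
qed

lemma powr_root_pow: fixes y :: real assumes "0 \<le> y" "1 \<le> n" shows "y = (y powr (1 / n)) ^ n"
proof (cases "y = 0")
  case True then show ?thesis using assms by simp
next
  case False
  then have pos: "0 < y" using assms by simp
  have "(y powr (1 / n)) ^ n = (y powr (1 / n)) powr n"
    using pos by (subst powr_realpow) auto
  also have "\<dots> = y" using assms pos by (simp add: powr_powr)
  finally show ?thesis by simp
qed

lemma amgm:
  fixes x :: "nat \<Rightarrow> real"
  assumes "1 \<le> n" "\<And>i. i < n \<Longrightarrow> 0 \<le> x i"
  shows "(\<Prod>i<n. x i) \<le> ((\<Sum>i<n. x i) / n) ^ n"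
proof -
  have ne: "{..<n} \<noteq> {}" using assms(1) by (auto simp: lessThan_empty_iff)
  have am: "(\<Sum>i<n. x i / n) \<ge> (\<Prod>i<n. x i) powr (1 / n)"
    using arith_geom_mean[of "{..<n}" x] ne assms(2) by simp
  have P: "0 \<le> (\<Prod>i<n. x i)" using assms(2) by (auto intro: prod_nonneg)
  have "(\<Prod>i<n. x i) = ((\<Prod>i<n. x i) powr (1 / n)) ^ n"
    by (rule powr_root_pow[OF P assms(1)])
  also have "\<dots> \<le> ((\<Sum>i<n. x i / n)) ^ n"
    using am by (intro power_mono) auto
  also have "(\<Sum>i<n. x i / n) = (\<Sum>i<n. x i) / n" by (simp add: sum_divide_distrib)
  finally show ?thesis .
qed


lemma gt_nonneg:
  assumes NBS: "is_NBS N L T c r Jh gt" and i: "i < N"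
    and Tn: "\<forall>l<L. \<forall>x\<in>{0..<c l}. 0 \<le> T (c l - x)"
  shows "0 \<le> gt i"
proof -
  obtain Mm :: nat and p fs where p: "\<forall>m<Mm. 0 < p m" and fs: "\<forall>m<Mm. fs m \<in> feasible N L r"
    and g: "\<forall>i<N. gt i = (\<Sum>m<Mm. ereal (p m) * user_cost N L T c i (fs m))"
    using NBS unfolding is_NBS_def bargain_set_def mem_Collect_eq by blast
  have "0 \<le> ereal (p m) * user_cost N L T c i (fs m)" if m: "m < Mm" for m
  proof -
    have "0 \<le> user_cost N L T c i (fs m)"
      using user_cost_nonneg[OF fs[rule_format, OF m] i Tn] .
    moreover have "0 \<le> ereal (p m)" using p m by (simp add: less_imp_le)
    ultimately show ?thesis by simp
  qed
  then show ?thesis using g i by (auto intro!: sum_nonneg)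
qed

lemma case_eq:
  assumes eqd: "\<forall>i<N. r i = (\<Sum>j<N. r j) / real N" and N1: "1 \<le> N"
    and NEP: "is_NEP N L T c r fhat"
    and NBS: "is_NBS N L T c r (\<lambda>i. user_cost N L T c i fhat) gt"
    and f: "f \<in> feasible N L r"
    and good: "\<forall>l<L. link_flow N f l < c l"
    and dem: "\<forall>i<N. 0 < r i"
    and mono: "\<forall>l<L. strict_mono_on {0..<c l} (\<lambda>x. T (c l - x))"
    and Tn: "\<forall>l<L. \<forall>x\<in>{0..<c l}. 0 \<le> T (c l - x)"
    and C1: "\<forall>l<L. C1_on {0..<c l} (\<lambda>x. T (c l - x))"
  shows "(\<Sum>i<N. gt i) \<le> (\<Sum>i<N. user_cost N L T c i f)"
proof -
  have fh: "fhat \<in> feasible N L r" using NEP by (simp add: is_NEP_def)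
  define G where "G l = link_flow N f l" for l
  define \<tau> where "\<tau> l = T (c l - G l)" for l
  define s where "s = (\<Sum>l<L. G l * \<tau> l)"
  define R where "R = (\<Sum>j<N. r j)"
  have Gc: "\<forall>l<L. G l < c l" using good by (simp add: G_def)
  have G_nn: "0 \<le> G l" if "l < L" for l using link_flow_nn[OF f that] by (simp add: G_def)
  have sumG: "(\<Sum>l<L. G l) = R" using sum_link_flow[OF f] by (simp add: G_def R_def)
  have Jf: "user_cost N L T c i f = ereal (\<Sum>l<L. f i l * \<tau> l)" if "i < N" for i
    using cost_on_G[OF f _ Gc that] by (simp add: G_def \<tau>_def)
  have Sf: "(\<Sum>i<N. user_cost N L T c i f) = ereal s"
  proof -
    have "(\<Sum>i<N. user_cost N L T c i f) = ereal (\<Sum>i<N. \<Sum>l<L. f i l * \<tau> l)"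
      using Jf by (simp del: sum_ereal add: sum_ereal[symmetric])
    also have "(\<Sum>i<N. \<Sum>l<L. f i l * \<tau> l) = (\<Sum>l<L. \<Sum>i<N. f i l * \<tau> l)" by (rule sum.swap)
    also have "\<dots> = s" by (simp add: s_def G_def link_flow_def sum_distrib_right)
    finally show ?thesis .
  qed
  have Jh_nn: "0 \<le> user_cost N L T c i fhat" if "i < N" for i
    using user_cost_nonneg[OF fh that Tn] .
  have Jfin: "\<exists>x. user_cost N L T c i fhat = ereal x" if i: "i < N" for i
  proof -
    obtain z where "user_cost N L T c i fhat \<le> ereal (\<Sum>l<L. z l * T (c l - link_flow N f l))"
      using deviation[OF NEP f good i _ mono] dem i by blast
    then show ?thesis using Jh_nn[OF i] by (cases "user_cost N L T c i fhat") auto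
  qed
  have fin: "link_flow N fhat l < c l" if i: "i < N" and l: "l < L" and pos: "0 < fhat i l" for i l
  proof (rule ccontr)
    assume "\<not> ?thesis"
    then have "user_cost N L T c i fhat = \<infinity>"
      using uc_inf[OF fh i l Tn pos] by simp
    then show False using Jfin[OF i] by auto
  qed
  obtain J where J0: "user_cost N L T c 0 fhat = ereal J" using Jfin[of 0] N1 by auto
  have Jall: "user_cost N L T c i fhat = ereal J" if i: "i < N" for i
  proof (cases "i = 0")
    case True then show ?thesis using J0 by simp
  next
    case False
    have N0: "0 < N" using N1 by simp
    have r: "r i = r 0" using eqd i N0 by metis
    have fin': "\<forall>l<L. (0 < fhat i l \<or> 0 < fhat 0 l) \<longrightarrow> link_flow N fhat l < c l"
      using fin[OF i] fin[OF N0] by blast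
    have "user_cost N L T c i fhat = user_cost N L T c 0 fhat"
      using nep_sym[OF NEP i N0 False r fin' mono C1] .
    then show ?thesis using J0 by simp
  qed
  have gtle: "\<forall>i<N. gt i \<le> user_cost N L T c i fhat" using NBS by (simp add: is_NBS_def)
  have gtopt: "\<forall>g\<in>bargain_set N L T c r. (\<forall>i<N. g i \<le> user_cost N L T c i fhat) \<longrightarrow>
        (\<Prod>i<N. user_cost N L T c i fhat - g i) \<le> (\<Prod>i<N. user_cost N L T c i fhat - gt i)"
    using NBS by (simp add: is_NBS_def)
  define g where "g i = real_of_ereal (gt i)" for i
  have gt_eq: "gt i = ereal (g i)" if i: "i < N" for i
  proof -
    have "gt i \<le> ereal J" using gtle Jall i by auto
    then show ?thesis using gt_nonneg[OF NBS i Tn] by (cases "gt i") (auto simp: g_def)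
  qed
  have gJ: "g i \<le> J" if i: "i < N" for i using gtle Jall[OF i] gt_eq[OF i] i by auto
  have gnn: "0 \<le> g i" if i: "i < N" for i using gt_nonneg[OF NBS i Tn] gt_eq[OF i] by auto
  show ?thesis
  proof (rule ccontr)
    assume nt: "\<not> ?thesis"
    have "(\<Sum>i<N. gt i) = (\<Sum>i<N. ereal (g i))" by (rule sum.cong) (auto simp: gt_eq)
    then have sge: "(\<Sum>i<N. gt i) = ereal (\<Sum>i<N. g i)" by simp
    have sg: "s < (\<Sum>i<N. g i)" using nt Sf sge by simp
    define P :: "nat \<Rightarrow> nat \<Rightarrow> real" where "P i l = G l / N" for i l
    have Npos: "0 < real N" using N1 by simp
    have Pf: "P \<in> feasible N L r"
      unfolding feasible_def user_strategy_def P_def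
    proof (intro CollectI allI impI)
      fix i assume i: "i < N"
      have a: "\<forall>l<L. 0 \<le> G l / real N" using G_nn Npos by simp
      have "(\<Sum>l<L. G l / real N) = R / N" using sumG by (simp add: sum_divide_distrib[symmetric])
      also have "\<dots> = r i" using eqd[rule_format, OF i] by (simp add: R_def)
      finally show "(\<forall>l<L. 0 \<le> G l / real N) \<and> (\<Sum>l<L. G l / real N) = r i" using a by blast
    qed
    have Pflow: "\<forall>l<L. link_flow N P l = G l" using Npos by (simp add: link_flow_def P_def)
    have cP: "user_cost N L T c i P = ereal (s / N)" if i: "i < N" for i
      using cost_on_G[OF Pf Pflow Gc i]
      by (simp add: P_def s_def \<tau>_def sum_divide_distrib)
    define h where "h i = ereal (s / N)" for i :: nat
    have hB: "h \<in> bargain_set N L T c r"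
      unfolding bargain_set_def
    proof (intro CollectI exI[of _ "1::nat"] exI[of _ "\<lambda>m. 1::real"] exI[of _ "\<lambda>m. P"] conjI)
      show "\<forall>m<(1::nat). (0::real) < 1" by simp
      show "(\<Sum>m<(1::nat). (1::real)) = 1" by simp
      show "\<forall>m<(1::nat). P \<in> feasible N L r" using Pf by simp
      show "\<forall>i<N. h i = (\<Sum>m<(1::nat). ereal 1 * user_cost N L T c i P)"
        using cP by (simp add: h_def)
    qed
    have sJ: "s / N < J"
    proof -
      have "(\<Sum>i<N. g i) \<le> (\<Sum>i<N. J)" using gJ by (intro sum_mono) auto
      then have "s < N * J" using sg by simp
      then show ?thesis using Npos by (simp add: divide_less_eq mult.commute)
    qed
    have hle: "\<forall>i<N. h i \<le> user_cost N L T c i fhat" using Jall sJ by (simp add: h_def)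
    have "(\<Prod>i<N. user_cost N L T c i fhat - h i) \<le> (\<Prod>i<N. user_cost N L T c i fhat - gt i)"
      using gtopt hB hle by blast
    also have "(\<Prod>i<N. user_cost N L T c i fhat - gt i) = ereal (\<Prod>i<N. J - g i)"
    proof -
      have "(\<Prod>i<N. user_cost N L T c i fhat - gt i) = (\<Prod>i<N. ereal (J - g i))"
        by (rule prod.cong) (auto simp: Jall gt_eq)
      then show ?thesis by (simp add: prod_ereal)
    qed
    also have "(\<Prod>i<N. user_cost N L T c i fhat - h i) = ereal ((J - s / N) ^ N)"
    proof -
      have "(\<Prod>i<N. user_cost N L T c i fhat - h i) = (\<Prod>i<N. ereal (J - s / N))"
        by (rule prod.cong) (auto simp: Jall h_def)
      then show ?thesis by (simp add: prod_ereal)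
    qed
    finally have ineq: "(J - s / N) ^ N \<le> (\<Prod>i<N. J - g i)" by simp
    have "(\<Prod>i<N. J - g i) \<le> ((\<Sum>i<N. J - g i) / N) ^ N"
      using amgm[OF N1, of "\<lambda>i. J - g i"] gJ by simp
    also have "(\<Sum>i<N. J - g i) / N = J - (\<Sum>i<N. g i) / N"
      using Npos by (simp add: sum_subtractf field_simps)
    also have "(J - (\<Sum>i<N. g i) / N) ^ N < (J - s / N) ^ N"
    proof (rule power_strict_mono)
      show "J - (\<Sum>i<N. g i) / N < J - s / N" using sg Npos by (simp add: divide_strict_right_mono)
      have "(\<Sum>i<N. g i) \<le> (\<Sum>i<N. J)" using gJ by (intro sum_mono) auto
      then show "0 \<le> J - (\<Sum>i<N. g i) / N" using Npos by (simp add: divide_le_eq mult.commute)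
      show "0 < N" using N1 by simp
    qed
    finally show False using ineq by simp
  qed
qed

lemma key_lemma:
  assumes N_pos: "1 \<le> N"
    and cap_pos: "\<forall>l<L. 0 < c l"
    and dem_pos: "\<forall>i<N. 0 < r i"
    and T_nonneg: "\<forall>l<L. \<forall>x\<in>{0..<c l}. 0 \<le> T (c l - x)"
    and T_incr: "\<forall>l<L. strict_mono_on {0..<c l} (\<lambda>x. T (c l - x))"
    and T_C1: "\<forall>l<L. C1_on {0..<c l} (\<lambda>x. T (c l - x))"
    and case_split: "N = 2 \<or> (\<forall>i<N. r i = (\<Sum>j<N. r j) / real N)"
    and NEP: "is_NEP N L T c r fhat"
    and NBS: "is_NBS N L T c r (\<lambda>i. user_cost N L T c i fhat) gt"
    and f: "f \<in> feasible N L r"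
  shows "(\<Sum>i<N. gt i) \<le> (\<Sum>i<N. user_cost N L T c i f)"
proof (cases "\<forall>l<L. link_flow N f l < c l")
  case True
  show ?thesis
  proof (cases "N = 2")
    case True
    show ?thesis by (rule case_two[OF True NEP NBS f \<open>\<forall>l<L. link_flow N f l < c l\<close> dem_pos T_incr T_nonneg])
  next
    case False
    then have eqd: "\<forall>i<N. r i = (\<Sum>j<N. r j) / real N" using case_split by blast
    show ?thesis by (rule case_eq[OF eqd N_pos NEP NBS f \<open>\<forall>l<L. link_flow N f l < c l\<close> dem_pos T_incr T_nonneg T_C1])
  qed
next
  case False
  then obtain l where l: "l < L" and over: "c l \<le> link_flow N f l" by auto
  have "\<exists>i<N. 0 < f i l"
  proof (rule ccontr)
    assume "\<not> ?thesis"
    then have "\<forall>i\<in>{..<N}. f i l \<le> 0" by (metis lessThan_iff not_less)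
    then have "link_flow N f l \<le> 0" unfolding link_flow_def by (intro sum_nonpos) auto
    then show False using over cap_pos l by force
  qed
  then obtain i where i: "i < N" and pos: "0 < f i l" by auto
  have inf: "user_cost N L T c i f = \<infinity>" by (rule uc_inf[OF f i l T_nonneg pos over])
  have "user_cost N L T c i f \<le> (\<Sum>i<N. user_cost N L T c i f)"
    using sum_mono2[of "{..<N}" "{i}" "\<lambda>i. user_cost N L T c i f"] i user_cost_nonneg[OF f _ T_nonneg] by auto
  then have "(\<Sum>i<N. user_cost N L T c i f) = \<infinity>" using inf by (metis ereal_infty_less_eq(1))
  then show ?thesis by simp
qed

theorem corollary3p1:
  fixes N L :: nat and r c \<alpha> :: "nat \<Rightarrow> real" and T :: "real \<Rightarrow> real"
    and fhat :: "nat \<Rightarrow> nat \<Rightarrow> real" and gt :: "nat \<Rightarrow> ereal"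
  assumes N_pos: "1 \<le> N"
    and cap_pos: "\<forall>l<L. 0 < c l"
    and dem_pos: "\<forall>i<N. 0 < r i"
    and total: "(\<Sum>i<N. r i) < (\<Sum>l<L. c l)"
    and T_nonneg: "\<forall>l<L. \<forall>x\<in>{0..<c l}. 0 \<le> T (c l - x)"
    and T_incr: "\<forall>l<L. strict_mono_on {0..<c l} (\<lambda>x. T (c l - x))"
    and T_convex: "\<forall>l<L. convex_on {0..<c l} (\<lambda>x. T (c l - x))"
    and T_C1: "\<forall>l<L. C1_on {0..<c l} (\<lambda>x. T (c l - x))"
    and case_split: "N = 2 \<or> (\<forall>i<N. r i = (\<Sum>j<N. r j) / real N)"
    and alpha_pos: "\<forall>i<N. 0 < \<alpha> i"
    and alpha_sum: "(\<Sum>i<N. \<alpha> i) = 1"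
    and NEP: "is_NEP N L T c r fhat"
    and NBS: "is_NBS N L T c r (\<lambda>i. user_cost N L T c i fhat) gt"
  shows "PoS N L T c r \<alpha> gt \<le> ereal (Max (\<alpha> ` {..<N}) / Min (\<alpha> ` {..<N}))"
proof -
  define M where "M = Max (\<alpha> ` {..<N})"
  define m where "m = Min (\<alpha> ` {..<N})"
  define S where "S f = (\<Sum>i<N. user_cost N L T c i f)" for f
  define num where "num = (\<Sum>i<N. ereal (\<alpha> i) * gt i)"
  define I where "I = (INF f\<in>feasible N L r. sys_cost N L T c \<alpha> f)"
  have ne: "\<alpha> ` {..<N} \<noteq> {}" using N_pos by (auto simp: lessThan_empty_iff)
  have mpos: "0 < m" unfolding m_def using alpha_pos ne by (subst Min_gr_iff) auto
  have mle: "m \<le> \<alpha> i" if "i < N" for i unfolding m_def using that by (auto intro: Min_le)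
  have Mge: "\<alpha> i \<le> M" if "i < N" for i unfolding M_def using that by (auto intro: Max_ge)
  have Mpos: "0 < M" using mpos mle[of 0] Mge[of 0] N_pos by auto
  define k where "k = M / m"
  have kpos: "0 < k" using Mpos mpos by (simp add: k_def)
  have key: "(\<Sum>i<N. gt i) \<le> S f" if "f \<in> feasible N L r" for f
    unfolding S_def by (rule key_lemma[OF N_pos cap_pos dem_pos T_nonneg T_incr T_C1 case_split NEP NBS that])
  have gt_nn: "0 \<le> gt i" if "i < N" for i
    using gt_nonneg[OF NBS that T_nonneg] .
  have bound: "num \<le> ereal k * sys_cost N L T c \<alpha> f" if f: "f \<in> feasible N L r" for f
  proof -
    have J_nn: "\<And>i. i \<in> {..<N} \<Longrightarrow> 0 \<le> user_cost N L T c i f"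
      using user_cost_nonneg[OF f _ T_nonneg] by auto
    have "num \<le> (\<Sum>i<N. ereal M * gt i)"
      unfolding num_def using Mge gt_nn
      by (intro sum_mono ereal_mult_right_mono) auto
    also have "\<dots> = ereal M * (\<Sum>i<N. gt i)"
      using gt_nn by (subst sum_ereal_right_distrib) auto
    also have "\<dots> \<le> ereal M * S f"
      using key[OF f] Mpos by (intro ereal_mult_left_mono) auto
    also have "\<dots> = ereal k * (ereal m * S f)"
      using mpos by (simp add: k_def mult.assoc[symmetric])
    also have "ereal m * S f = (\<Sum>i<N. ereal m * user_cost N L T c i f)"
      unfolding S_def using J_nn by (subst sum_ereal_right_distrib) auto
    also have "\<dots> \<le> sys_cost N L T c \<alpha> f"
      unfolding sys_cost_def using mle J_nn
      by (intro sum_mono ereal_mult_right_mono) auto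
    finally have fin: "(\<And>x y. x \<le> y \<Longrightarrow> ereal k * x \<le> ereal k * y) \<Longrightarrow> num \<le> ereal k * sys_cost N L T c \<alpha> f" .
    have monok: "\<And>x y. x \<le> y \<Longrightarrow> ereal k * x \<le> ereal k * y"
      using kpos by (intro ereal_mult_left_mono) auto
    show ?thesis by (rule fin[OF monok])
  qed
  have "num / ereal k \<le> I"
    unfolding I_def
  proof (rule INF_greatest)
    fix f assume "f \<in> feasible N L r"
    then show "num / ereal k \<le> sys_cost N L T c \<alpha> f"
      using bound kpos by (subst ereal_divide_le_pos) auto
  qed
  then have numI: "num \<le> ereal k * I"
    using kpos by (subst (asm) ereal_divide_le_pos) auto
  have num_nn: "0 \<le> num" unfolding num_def using gt_nn alpha_pos
    by (auto intro!: sum_nonneg)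
  have I_nn: "0 \<le> I" unfolding I_def
  proof (rule INF_greatest)
    fix f assume f: "f \<in> feasible N L r"
    show "0 \<le> sys_cost N L T c \<alpha> f" unfolding sys_cost_def
    proof (rule sum_nonneg)
      fix i assume i: "i \<in> {..<N}"
      have "0 \<le> user_cost N L T c i f" using user_cost_nonneg[OF f _ T_nonneg] i by auto
      moreover have "0 \<le> ereal (\<alpha> i)" using alpha_pos i by (simp add: less_imp_le)
      ultimately show "0 \<le> ereal (\<alpha> i) * user_cost N L T c i f" by simp
    qed
  qed
  have "num / I \<le> ereal k"
  proof (cases "I = 0")
    case True
    then have "num = 0" using numI num_nn by auto
    then show ?thesis using True kpos by simp
  next
    case False
    show ?thesis
    proof (cases "I = \<infinity>")
      case True
      then show ?thesis using kpos numI num_nn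
        by (cases num) auto
    next
      case F2: False
      then show ?thesis using False I_nn numI
        by (subst ereal_divide_le_pos) (auto simp: mult.commute)
    qed
  qed
  then show ?thesis
    unfolding PoS_def num_def[symmetric] I_def[symmetric] k_def M_def m_def .
qed

end
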